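(* Let $K\subseteq\mathbb{R}^d$ be a convex body, $\Lambda\subseteq\mathbb{R}^d$ a lattice with basis $\{f_1,\dots,f_d\}$, and $i\in\{1,\dots,d\}$. For each $i$-element subset $I\subseteq\{1,\dots,d\}$ let $L_I=\operatorname{span}_{\mathbb{R}}\{f_k: k\in I\}$. If $\dim(K\cap L_I)=i$ for every $i$-element subset $I$, then $$\mu_i(K,\Lambda)\leqslant\max\Big\{\mu(K\cap L_I,\Lambda\cap L_I): I\subseteq\{1,\dots,d\},\ |I|=i\Big\}.$$
   Context: A convex body is a full-dimensional compact convex set; a lattice is a full-rank discrete subgroup. For a convex body $K\subseteq\mathbb{R}^d$ and $i\in\{1,\dots,d\}$, $\mu_i(K,\Lambda)=\min\{\mu\ge0: (\mu K+\Lambda)\cap U\ne\emptyset$ for every $(d-i)$-dimensional affine subspace $U\subseteq\mathbb{R}^d\}$. For a $k$-dimensional real vector space $E$, a lattice $\Gamma\subseteq E$ and a convex body $C\subseteq E$, the covering radius is $\mu(C,\Gamma)=\min\{\mu\ge0:\mu C+\Gamma=E\}$; here $\mu(K\cap L_I,\Lambda\cap L_I)$ is computed inside $L_I$. *)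

theory Defs
  imports "HOL-Analysis.Analysis"
begin

definition convex_body :: "'a::euclidean_space set \<Rightarrow> bool" where
  "convex_body K \<longleftrightarrow> compact K \<and> convex K \<and> interior K \<noteq> {}"

definition lattice_of :: "(nat \<Rightarrow> 'a::euclidean_space) \<Rightarrow> nat \<Rightarrow> 'a set" where
  "lattice_of f d = {(\<Sum>k\<in>{1..d}. of_int (z k) *\<^sub>R f k) | z. True}"

definition dilate_plus :: "real \<Rightarrow> 'a::real_vector set \<Rightarrow> 'a set \<Rightarrow> 'a set" where
  "dilate_plus \<mu> C G = {\<mu> *\<^sub>R x + g | x g. x \<in> C \<and> g \<in> G}"

definition covering_minimum :: "nat \<Rightarrow> 'a::euclidean_space set \<Rightarrow> 'a set \<Rightarrow> real" where
  "covering_minimum i K L = Inf {\<mu>. \<mu> \<ge> 0 \<and>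
     (\<forall>U. affine U \<and> U \<noteq> {} \<and> aff_dim U = int (DIM('a) - i) \<longrightarrow>
          dilate_plus \<mu> K L \<inter> U \<noteq> {})}"

definition covering_radius_in :: "'a::euclidean_space set \<Rightarrow> 'a set \<Rightarrow> 'a set \<Rightarrow> real" where
  "covering_radius_in E C G = Inf {\<mu>. \<mu> \<ge> 0 \<and> dilate_plus \<mu> C G = E}"

end

theory Submission
  imports Defs
begin

lemma exists_I:
  fixes U :: "'a::euclidean_space set" and f :: "nat \<Rightarrow> 'a"
  assumes inj: "inj_on f {1..DIM('a)}" and ind: "independent (f ` {1..DIM('a)})"
    and aU: "affine U" and ne: "U \<noteq> {}" and dU: "aff_dim U = int (DIM('a) - i)"
    and iD: "i \<le> DIM('a)"
  shows "\<exists>I. I \<subseteq> {1..DIM('a)} \<and> card I = i \<and> U \<inter> span (f ` I) \<noteq> {}"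
proof -
  let ?F = "f ` {1..DIM('a)}"
  obtain a where a: "a \<in> U" using ne by auto
  define V where "V = (\<lambda>x. x - a) ` U"
  have sV: "subspace V" unfolding V_def by (rule affine_diffs_subspace_subtract[OF aU a])
  have dV: "dim V = DIM('a) - i"
    using aff_dim_eq_dim_subtract[of a U] hull_inc[OF a] dU unfolding V_def by simp
  obtain B where B: "B \<subseteq> V" "independent B" "V \<subseteq> span B" "card B = dim V"
    using basis_exists by blast
  obtain B' where B': "B \<subseteq> B'" "B' \<subseteq> B \<union> ?F" "independent B'" "B \<union> ?F \<subseteq> span B'"
    using maximal_independent_subset_extend[of B "B \<union> ?F"] B(2) by blast
  have cF: "card ?F = DIM('a)" using card_image[OF inj] by simp
  have spF: "UNIV \<subseteq> span ?F"
    using card_eq_dim[of ?F UNIV] cF ind by simp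
  have spB': "span B' = UNIV"
    using spF B'(4) by (metis span_mono span_span subset_antisym top_greatest le_sup_iff subset_trans)
  have fB': "finite B'" using independent_bound B'(3) by blast
  have cB': "card B' = DIM('a)"
    using dim_eq_card_independent[OF B'(3)] spB' by (metis dim_UNIV dim_span)
  define F' where "F' = B' - B"
  have fB: "finite B" using fB' B'(1) finite_subset by blast
  have cF': "card F' = i" unfolding F'_def using card_Diff_subset[OF fB B'(1)] cB' B(4) dV iD by simp
  have F'F: "F' \<subseteq> ?F" using B'(2) unfolding F'_def by blast
  define I where "I = {k \<in> {1..DIM('a)}. f k \<in> F'}"
  have fI: "f ` I = F'" unfolding I_def using F'F by blast
  have IS: "I \<subseteq> {1..DIM('a)}" unfolding I_def by auto
  have cI: "card I = i" using cF' fI card_image[OF inj_on_subset[OF inj IS]] by simp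
  have "B' = B \<union> F'" unfolding F'_def using B'(1) by blast
  then have "- a \<in> span (B \<union> F')" using spB' by simp
  then obtain v w where vw: "- a = v + w" "v \<in> span B" "w \<in> span F'" unfolding span_Un by blast
  have "v \<in> V" using vw(2) B(1) sV by (metis span_minimal subsetD)
  then obtain u where u: "u \<in> U" "v = u - a" unfolding V_def by blast
  have "u = - w" using vw u by (simp add: algebra_simps) (metis add.commute add_diff_cancel_left' minus_diff_eq neg_eq_iff_add_eq_0)
  then have "u \<in> span F'" using vw(3) by (simp add: span_neg)
  then show ?thesis using u cI fI IS by blast
qed

lemma upward:
  fixes E :: "'a::euclidean_space set"
  assumes sE: "subspace E" and CE: "C \<subseteq> E" and cC: "convex C" and cne: "C \<noteq> {}"
    and mu: "0 \<le> \<mu>" "\<mu> \<le> \<mu>'" "0 < \<mu>'" and cov: "dilate_plus \<mu> C G = E" and p: "p \<in> E"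
  shows "p \<in> dilate_plus \<mu>' C G"
proof -
  obtain c where c: "c \<in> C" using cne by auto
  define t where "t = \<mu>' - \<mu>"
  have "p - t *\<^sub>R c \<in> E" using subspace_diff[OF sE p subspace_scale[OF sE, of c t]] c CE by blast
  then obtain x g where xg: "p - t *\<^sub>R c = \<mu> *\<^sub>R x + g" "x \<in> C" "g \<in> G"
    using cov unfolding dilate_plus_def by blast
  define y where "y = (\<mu> / \<mu>') *\<^sub>R x + (t / \<mu>') *\<^sub>R c"
  have s1: "\<mu> / \<mu>' + t / \<mu>' = 1" using mu unfolding t_def by (simp add: add_divide_distrib[symmetric])
  have "y \<in> C" unfolding y_def
    using convexD[OF cC xg(2) c, of "\<mu>/\<mu>'" "t/\<mu>'"] mu t_def s1 by simp
  moreover have "\<mu>' *\<^sub>R y = \<mu> *\<^sub>R x + t *\<^sub>R c" using mu by (simp add: y_def scaleR_add_right)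
  moreover have "p = \<mu> *\<^sub>R x + g + t *\<^sub>R c" using xg(1) by (simp add: diff_eq_eq)
  ultimately have "y \<in> C \<and> p = \<mu>' *\<^sub>R y + g" by (simp add: algebra_simps)
  then show ?thesis using xg(3) unfolding dilate_plus_def by blast
qed

lemma nonempty_cov:
  fixes K :: "'a::euclidean_space set" and f :: "nat \<Rightarrow> 'a"
  assumes cK: "convex K"
    and inj: "inj_on f {1..DIM('a)}" and ind: "independent (f ` {1..DIM('a)})"
    and IS: "I \<subseteq> {1..DIM('a)}"
    and ad: "aff_dim (K \<inter> span (f ` I)) = int (card I)"
  shows "\<exists>\<mu>. 0 \<le> \<mu> \<and> dilate_plus \<mu> (K \<inter> span (f ` I)) (lattice_of f DIM('a) \<inter> span (f ` I)) = span (f ` I)"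
proof -
  define E where "E = span (f ` I)"
  define C where "C = K \<inter> E"
  have fI: "finite I" using IS finite_subset by blast
  have injI: "inj_on f I" using inj_on_subset[OF inj IS] .
  have indI: "independent (f ` I)" using independent_mono[OF ind] IS by blast
  have dE: "dim E = card I" unfolding E_def using dim_span_eq_card_independent[OF indI] card_image[OF injI] by simp
  have sE: "subspace E" unfolding E_def by simp
  have Cne: "C \<noteq> {}" using ad unfolding C_def E_def by (metis aff_dim_empty_eq of_nat_0_le_iff neg_0_le_iff_le not_one_le_zero)
  have cC: "convex C" unfolding C_def E_def using cK convex_Int subspace_imp_convex[OF subspace_span] by blast
  have hull: "affine hull C = E"
  proof (rule affine_dim_equal)
    show "affine (affine hull C)" by simp
    show "affine E" using sE subspace_imp_affine by blast
    show "affine hull C \<noteq> {}" using Cne by simp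
    show "affine hull C \<subseteq> E" by (rule hull_minimal) (auto simp: C_def \<open>affine E\<close>)
    show "aff_dim (affine hull C) = aff_dim E" using ad aff_dim_subspace[OF sE] dE unfolding C_def E_def by simp
  qed
  obtain c where c: "c \<in> rel_interior C" using rel_interior_eq_empty[OF cC] Cne by blast
  then obtain r where r: "r > 0" "cball c r \<inter> E \<subseteq> C" "c \<in> C"
    using mem_rel_interior_cball[of c C] hull by auto
  define R where "R = (\<Sum>k\<in>I. norm (f k))"
  have R0: "R \<ge> 0" unfolding R_def by (simp add: sum_nonneg)
  define \<mu> where "\<mu> = R / r + 1"
  have mu0: "\<mu> > 0" unfolding \<mu>_def using R0 r(1) by (smt (verit) divide_nonneg_pos)
  have muR: "R / \<mu> \<le> r"
  proof -
    have "R \<le> r * \<mu>" unfolding \<mu>_def using r(1) R0 by (simp add: field_simps)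
    then show ?thesis using mu0 by (simp add: divide_le_eq mult.commute)
  qed
  have CE: "C \<subseteq> E" unfolding C_def by blast
  have "dilate_plus \<mu> C (lattice_of f DIM('a) \<inter> E) = E"
  proof
    show "dilate_plus \<mu> C (lattice_of f DIM('a) \<inter> E) \<subseteq> E"
      unfolding dilate_plus_def using CE sE by (auto intro!: subspace_add subspace_scale)
  next
    show "E \<subseteq> dilate_plus \<mu> C (lattice_of f DIM('a) \<inter> E)"
    proof
      fix p assume p: "p \<in> E"
      have "p - \<mu> *\<^sub>R c \<in> E" using subspace_diff[OF sE p subspace_scale[OF sE, of c \<mu>]] r(3) CE by blast
      then obtain u where u: "p - \<mu> *\<^sub>R c = (\<Sum>v\<in>f ` I. u v *\<^sub>R v)"
        unfolding E_def using span_finite[of "f ` I"] fI by auto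
      define a where "a k = u (f k)" for k
      have u2: "p - \<mu> *\<^sub>R c = (\<Sum>k\<in>I. a k *\<^sub>R f k)"
        using u sum.reindex[OF injI, of "\<lambda>v. u v *\<^sub>R v"] unfolding a_def by simp
      define g where "g = (\<Sum>k\<in>I. of_int \<lfloor>a k\<rfloor> *\<^sub>R f k)"
      define y where "y = (\<Sum>k\<in>I. (a k - of_int \<lfloor>a k\<rfloor>) *\<^sub>R f k)"
      have pyg: "p = \<mu> *\<^sub>R c + y + g"
        using u2 unfolding y_def g_def
        by (simp add: scaleR_diff_left sum_subtractf diff_eq_eq)
      have ny: "norm y \<le> R"
      proof -
        have "norm y \<le> (\<Sum>k\<in>I. norm ((a k - of_int \<lfloor>a k\<rfloor>) *\<^sub>R f k))"
          unfolding y_def by (rule norm_sum)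
        also have "\<dots> \<le> (\<Sum>k\<in>I. norm (f k))"
        proof (rule sum_mono)
          fix k
          have "\<bar>a k - of_int \<lfloor>a k\<rfloor>\<bar> \<le> 1"
            by (smt (verit) of_int_floor_le real_of_int_floor_add_one_gt)
          then show "norm ((a k - of_int \<lfloor>a k\<rfloor>) *\<^sub>R f k) \<le> norm (f k)"
            by (simp add: mult_left_le_one_le)
        qed
        finally show ?thesis unfolding R_def .
      qed
      define x where "x = c + (1 / \<mu>) *\<^sub>R y"
      have yE: "y \<in> E" unfolding y_def E_def
        by (intro span_sum span_scale span_base) (use fI in auto)
      have gE: "g \<in> E" unfolding g_def E_def
        by (intro span_sum span_scale span_base) (use fI in auto)
      have xE: "x \<in> E" unfolding x_def using r(3) CE yE sE by (auto intro!: subspace_add subspace_scale)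
      have "dist c x = norm y / \<mu>" unfolding x_def dist_norm using mu0 by simp
      also have "\<dots> \<le> R / \<mu>" using ny mu0 by (simp add: divide_right_mono)
      finally have "x \<in> cball c r" using muR by simp
      then have xC: "x \<in> C" using r(2) xE by blast
      have px: "p = \<mu> *\<^sub>R x + g" using pyg mu0 unfolding x_def by (simp add: scaleR_add_right)
      define z where "z k = (if k \<in> I then \<lfloor>a k\<rfloor> else 0)" for k
      have "(\<Sum>k\<in>{1..DIM('a)}. of_int (z k) *\<^sub>R f k) = (\<Sum>k\<in>{1..DIM('a)}. if k \<in> I then of_int \<lfloor>a k\<rfloor> *\<^sub>R f k else 0)"
        by (rule sum.cong) (auto simp: z_def)
      also have "\<dots> = (\<Sum>k\<in>{1..DIM('a)} \<inter> I. of_int \<lfloor>a k\<rfloor> *\<^sub>R f k)"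
        by (simp add: sum.inter_restrict)
      also have "\<dots> = g" unfolding g_def using IS by (simp add: Int_absorb1)
      finally have "g \<in> lattice_of f DIM('a)" unfolding lattice_of_def by blast
      then show "p \<in> dilate_plus \<mu> C (lattice_of f DIM('a) \<inter> E)"
        unfolding dilate_plus_def using px xC gE by blast
    qed
  qed
  then show ?thesis using mu0 unfolding C_def E_def by (intro exI[of _ \<mu>]) auto
qed


theorem theorem1p3:
  fixes K :: "'a::euclidean_space set" and f :: "nat \<Rightarrow> 'a" and i :: nat
  assumes "convex_body K"
    and "inj_on f {1..DIM('a)}" and "independent (f ` {1..DIM('a)})"
    and "1 \<le> i" and "i \<le> DIM('a)"
    and "\<forall>I. I \<subseteq> {1..DIM('a)} \<and> card I = i \<longrightarrow>
           aff_dim (K \<inter> span (f ` I)) = int i"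
  shows "covering_minimum i K (lattice_of f DIM('a)) \<le>
    Max {covering_radius_in (span (f ` I)) (K \<inter> span (f ` I))
           (lattice_of f DIM('a) \<inter> span (f ` I)) | I. I \<subseteq> {1..DIM('a)} \<and> card I = i}"
proof -
  note inj = assms(2) and ind = assms(3) and iD = assms(5) and ad = assms(6)
  have cK: "convex K" using assms(1) unfolding convex_body_def by blast
  define \<Lambda> where "\<Lambda> = lattice_of f DIM('a)"
  define S where "S I = {\<mu>. \<mu> \<ge> 0 \<and> dilate_plus \<mu> (K \<inter> span (f ` I)) (\<Lambda> \<inter> span (f ` I)) = span (f ` I)}" for I
  define cr where "cr I = covering_radius_in (span (f ` I)) (K \<inter> span (f ` I)) (\<Lambda> \<inter> span (f ` I))" for I
  have crS: "cr I = Inf (S I)" for I unfolding cr_def S_def covering_radius_in_def by simp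
  define X where "X = {cr I | I. I \<subseteq> {1..DIM('a)} \<and> card I = i}"
  define M where "M = Max X"
  have Sne: "S I \<noteq> {}" if "I \<subseteq> {1..DIM('a)}" "card I = i" for I
    using nonempty_cov[OF cK inj ind that(1)] ad that unfolding S_def \<Lambda>_def by auto
  have Sbdd: "bdd_below (S I)" for I unfolding S_def bdd_below_def by auto
  have finX: "finite X"
  proof -
    have "X \<subseteq> cr ` Pow {1..DIM('a)}" unfolding X_def by auto
    then show ?thesis using finite_subset by blast
  qed
  have crM: "cr I \<le> M" if "I \<subseteq> {1..DIM('a)}" "card I = i" for I
    unfolding M_def using finX that X_def by (intro Max_ge) auto
  have cr0: "cr I \<ge> 0" if "I \<subseteq> {1..DIM('a)}" "card I = i" for I
    unfolding crS using Sne[OF that] by (intro cInf_greatest) (auto simp: S_def)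
  have i1: "{1..i} \<subseteq> {1..DIM('a)}" "card {1..i} = i" using iD by auto
  have M0: "M \<ge> 0" using crM[OF i1] cr0[OF i1] by linarith
  define T where "T = {\<mu>. \<mu> \<ge> 0 \<and>
     (\<forall>U. affine U \<and> U \<noteq> {} \<and> aff_dim U = int (DIM('a) - i) \<longrightarrow>
          dilate_plus \<mu> K \<Lambda> \<inter> U \<noteq> {})}"
  have inT: "M + e \<in> T" if e: "e > 0" for e
  proof -
    have "dilate_plus (M + e) K \<Lambda> \<inter> U \<noteq> {}"
      if U: "affine U" "U \<noteq> {}" "aff_dim U = int (DIM('a) - i)" for U
    proof -
      obtain I where I: "I \<subseteq> {1..DIM('a)}" "card I = i" "U \<inter> span (f ` I) \<noteq> {}"
        using exists_I[OF inj ind U iD] by blast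
      obtain p where p: "p \<in> U" "p \<in> span (f ` I)" using I(3) by blast
      have "Inf (S I) < M + e" using crM[OF I(1,2)] e crS[of I] by linarith
      then obtain \<mu> where mu: "\<mu> \<in> S I" "\<mu> < M + e" using cInf_lessD[OF Sne[OF I(1,2)]] by blast
      have "p \<in> dilate_plus (M + e) (K \<inter> span (f ` I)) (\<Lambda> \<inter> span (f ` I))"
      proof (rule upward[where \<mu> = \<mu>])
        show "subspace (span (f ` I))" by simp
        show "K \<inter> span (f ` I) \<subseteq> span (f ` I)" by blast
        show "convex (K \<inter> span (f ` I))" using cK convex_Int subspace_imp_convex[OF subspace_span] by blast
        show "K \<inter> span (f ` I) \<noteq> {}" using ad I by (metis aff_dim_empty_eq of_nat_0_le_iff neg_0_le_iff_le not_one_le_zero)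
        show "0 \<le> \<mu>" "\<mu> \<le> M + e" using mu unfolding S_def by auto
        show "0 < M + e" using M0 e by simp
        show "dilate_plus \<mu> (K \<inter> span (f ` I)) (\<Lambda> \<inter> span (f ` I)) = span (f ` I)" using mu unfolding S_def by auto
        show "p \<in> span (f ` I)" by (rule p(2))
      qed
      then have "p \<in> dilate_plus (M + e) K \<Lambda>" unfolding dilate_plus_def by blast
      then show ?thesis using p(1) by blast
    qed
    then show ?thesis unfolding T_def using M0 e by auto
  qed
  have bT: "bdd_below T" unfolding T_def bdd_below_def by auto
  have le: "Inf T \<le> M + e" if "e > 0" for e using cInf_lower[OF inT[OF that] bT] .
  have "Inf T \<le> M" by (rule field_le_epsilon) (rule le)
  moreover have "covering_minimum i K (lattice_of f DIM('a)) = Inf T"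
    unfolding covering_minimum_def T_def \<Lambda>_def by simp
  moreover have "Max {covering_radius_in (span (f ` I)) (K \<inter> span (f ` I))
           (lattice_of f DIM('a) \<inter> span (f ` I)) | I. I \<subseteq> {1..DIM('a)} \<and> card I = i} = M"
    unfolding M_def X_def cr_def \<Lambda>_def by simp
  ultimately show ?thesis by simp
qed

end
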